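(* For all $\alpha,\beta,\epsilon>0$ there is an $(\epsilon,(1+\alpha)\epsilon+\beta)$-tolerant tester for (undirected) connectivity.
   Context: Model: graphs on $n$ vertices; $m$ is a fixed upper bound on the number of edges, $m=\Omega(n)$; access is via a neighbor oracle returning, for a vertex $v$, $\deg(v)$ or its $i$-th neighbor (one query each). $\mathrm{dist}(G_1,G_2)$ is the number of unordered pairs that are an edge in exactly one graph, divided by $m$; $G$ is $\epsilon$-close to a property $\mathcal{P}$ if $\min_{G'\in\mathcal{P}}\mathrm{dist}(G,G')\le\epsilon$ and $\epsilon$-far otherwise. An $(\epsilon_1,\epsilon_2)$-tolerant tester for $\mathcal{P}$ is a randomized algorithm with neighbor-oracle access to the input graph $G$ that makes $o(m)$ queries, accepts with probability $\ge 2/3$ if $G$ is $\epsilon_1$-close to $\mathcal{P}$, and accepts with probability $\le 1/3$ if $G$ is $\epsilon_2$-far from $\mathcal{P}$. *)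

theory Defs
  imports "HOL-Probability.Probability"
begin

definition is_graph :: "nat \<Rightarrow> nat set set \<Rightarrow> bool" where
  "is_graph n E \<longleftrightarrow> (\<forall>e\<in>E. \<exists>u v. u < n \<and> v < n \<and> u \<noteq> v \<and> e = {u, v})"

definition graph_connected :: "nat \<Rightarrow> nat set set \<Rightarrow> bool" where
  "graph_connected n E \<longleftrightarrow>
     (\<forall>u<n. \<forall>v<n. (u, v) \<in> {(x, y). {x, y} \<in> E}\<^sup>*)"

definition gdist :: "nat \<Rightarrow> nat set set \<Rightarrow> nat set set \<Rightarrow> real" where
  "gdist m E1 E2 = real (card ((E1 - E2) \<union> (E2 - E1))) / real m"

text \<open>eps-close to connectivity: some connected graph on the same vertex set
  is within distance eps (the set of such graphs is finite and nonempty, so this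
  is the same as the minimum distance being at most eps).\<close>

definition close_to_conn :: "nat \<Rightarrow> nat \<Rightarrow> real \<Rightarrow> nat set set \<Rightarrow> bool" where
  "close_to_conn n m eps E \<longleftrightarrow>
     (\<exists>E'. is_graph n E' \<and> graph_connected n E' \<and> gdist m E E' \<le> eps)"

text \<open>The oracle is given by adjacency lists: adj v lists the neighbours of v
  in an arbitrary order. deg(v) = length (adj v); the i-th neighbour (0-indexed)
  is adj v ! i, and an out-of-range neighbour query returns None.\<close>

definition valid_adj :: "nat \<Rightarrow> (nat \<Rightarrow> nat list) \<Rightarrow> bool" where
  "valid_adj n adj \<longleftrightarrow>
     (\<forall>v. distinct (adj v)) \<and>
     (\<forall>v. n \<le> v \<longrightarrow> adj v = []) \<and>
     (\<forall>v. set (adj v) \<subseteq> {..<n}) \<and>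
     (\<forall>v. v \<notin> set (adj v)) \<and>
     (\<forall>u v. u \<in> set (adj v) \<longleftrightarrow> v \<in> set (adj u))"

definition adj_edges :: "(nat \<Rightarrow> nat list) \<Rightarrow> nat set set" where
  "adj_edges adj = {{u, v} | u v. v \<in> set (adj u)}"

text \<open>A deterministic adaptive query algorithm is a decision tree: it either
  halts with an answer, or asks a degree query for a vertex, or asks for the
  i-th neighbour of a vertex, and continues depending on the answer.
  A randomized algorithm is a probability distribution over deterministic ones.\<close>

datatype qtree =
    Halt bool
  | QDeg nat "nat \<Rightarrow> qtree"
  | QNbr nat nat "nat option \<Rightarrow> qtree"

definition nbr_answer :: "(nat \<Rightarrow> nat list) \<Rightarrow> nat \<Rightarrow> nat \<Rightarrow> nat option" where
  "nbr_answer adj v i = (if i < length (adj v) then Some (adj v ! i) else None)"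

primrec run :: "(nat \<Rightarrow> nat list) \<Rightarrow> qtree \<Rightarrow> bool \<times> nat" where
  "run adj (Halt b) = (b, 0)"
| "run adj (QDeg v k) = (\<lambda>(b, c). (b, Suc c)) (run adj (k (length (adj v))))"
| "run adj (QNbr v i k) = (\<lambda>(b, c). (b, Suc c)) (run adj (k (nbr_answer adj v i)))"

definition accept_prob :: "qtree pmf \<Rightarrow> (nat \<Rightarrow> nat list) \<Rightarrow> real" where
  "accept_prob T adj = measure_pmf.prob T {t. fst (run adj t)}"

text \<open>Sublinearity o(m) is asymptotic in m, uniformly over the regime m = Omega(n),
  i.e. over m \<ge> c n for any fixed constant c > 0.\<close>

definition tolerant_conn_tester ::
  "real \<Rightarrow> real \<Rightarrow> (nat \<Rightarrow> nat \<Rightarrow> qtree pmf) \<Rightarrow> (nat \<Rightarrow> nat \<Rightarrow> nat) \<Rightarrow> bool" where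
  "tolerant_conn_tester eps1 eps2 T q \<longleftrightarrow>
     (\<forall>n m adj. valid_adj n adj \<longrightarrow> card (adj_edges adj) \<le> m \<longrightarrow>
        (\<forall>t\<in>set_pmf (T n m). snd (run adj t) \<le> q n m)) \<and>
     (\<forall>c>0. \<forall>\<delta>>0. \<exists>M. \<forall>n m. M \<le> m \<longrightarrow> c * real n \<le> real m \<longrightarrow>
        real (q n m) \<le> \<delta> * real m) \<and>
     (\<forall>n m adj. 0 < m \<longrightarrow> valid_adj n adj \<longrightarrow> card (adj_edges adj) \<le> m \<longrightarrow>
        (close_to_conn n m eps1 (adj_edges adj) \<longrightarrow> accept_prob (T n m) adj \<ge> 2/3) \<and>
        (\<not> close_to_conn n m eps2 (adj_edges adj) \<longrightarrow> accept_prob (T n m) adj \<le> 1/3))"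

end

theory Submission
  imports Defs
begin

datatype 'a gt = Ret 'a | GDeg nat "nat \<Rightarrow> 'a gt" | GNbr nat nat "nat option \<Rightarrow> 'a gt"

primrec gbind :: "'a gt \<Rightarrow> ('a \<Rightarrow> 'b gt) \<Rightarrow> 'b gt" where
  "gbind (Ret a) f = f a"
| "gbind (GDeg v k) f = GDeg v (\<lambda>d. gbind (k d) f)"
| "gbind (GNbr v i k) f = GNbr v i (\<lambda>w. gbind (k w) f)"

primrec grun :: "(nat \<Rightarrow> nat list) \<Rightarrow> 'a gt \<Rightarrow> 'a \<times> nat" where
  "grun adj (Ret a) = (a, 0)"
| "grun adj (GDeg v k) = (fst (grun adj (k (length (adj v)))), Suc (snd (grun adj (k (length (adj v))))))"
| "grun adj (GNbr v i k) = (fst (grun adj (k (nbr_answer adj v i))), Suc (snd (grun adj (k (nbr_answer adj v i)))))"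

primrec toq :: "bool gt \<Rightarrow> qtree" where
  "toq (Ret b) = Halt b"
| "toq (GDeg v k) = QDeg v (\<lambda>d. toq (k d))"
| "toq (GNbr v i k) = QNbr v i (\<lambda>w. toq (k w))"

lemma run_toq: "run adj (toq t) = grun adj t"
  by (induction t) (auto split: prod.splits)

lemma grun_bind: "grun adj (gbind t f) =
  (fst (grun adj (f (fst (grun adj t)))), snd (grun adj t) + snd (grun adj (f (fst (grun adj t)))))"
  by (induction t) auto


definition grel :: "nat set set \<Rightarrow> (nat \<times> nat) set" where
  "grel E = {(x, y). {x, y} \<in> E}\<^sup>*"
definition cls :: "nat set set \<Rightarrow> nat \<Rightarrow> nat set" where
  "cls E v = {u. (v, u) \<in> grel E}"
definition ncomp :: "nat \<Rightarrow> nat set set \<Rightarrow> nat" where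
  "ncomp n E = card (cls E ` {..<n})"

lemma grel_sym: "(x, y) \<in> grel E \<Longrightarrow> (y, x) \<in> grel E"
  unfolding grel_def
proof (induction rule: rtrancl_induct)
  case base then show ?case by simp
next
  case (step y z)
  have "(z, y) \<in> {(x, y). {x, y} \<in> E}" using step(2) by (simp add: insert_commute)
  then show ?case using step(3) by (rule converse_rtrancl_into_rtrancl)
qed

lemma grel_trans: "(x, y) \<in> grel E \<Longrightarrow> (y, z) \<in> grel E \<Longrightarrow> (x, z) \<in> grel E"
  unfolding grel_def by (rule rtrancl_trans)

lemma grel_mono: "(x, y) \<in> grel E'" if "E \<subseteq> E'" "(x, y) \<in> grel E"
proof -
  have "{(x, y). {x, y} \<in> E} \<subseteq> {(x, y). {x, y} \<in> E'}" using that by auto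
  then show ?thesis using that unfolding grel_def using rtrancl_mono by blast
qed

lemma cls_self: "v \<in> cls E v"
  by (simp add: cls_def grel_def)

lemma cls_eq_grel: "(x, y) \<in> grel E \<Longrightarrow> cls E x = cls E y"
  unfolding cls_def using grel_sym grel_trans by blast

lemma cls_eq: "u \<in> cls E v \<Longrightarrow> cls E u = cls E v"
  unfolding cls_def using cls_eq_grel[of v u E] by (simp add: cls_def)

lemma is_graph_sub: "is_graph n E \<Longrightarrow> E \<subseteq> Pow {..<n}"
  unfolding is_graph_def by auto

lemma is_graph_finite: "is_graph n E \<Longrightarrow> finite E"
  using is_graph_sub by (meson finite_Pow_iff finite_lessThan finite_subset)

lemma grel_bound: "(x, y) \<in> grel E \<Longrightarrow> is_graph n E \<Longrightarrow> x < n \<Longrightarrow> y < n"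
  unfolding grel_def
proof (induction rule: rtrancl_induct)
  case base then show ?case by simp
next
  case (step y z)
  then have "{y, z} \<subseteq> {..<n}" using is_graph_sub by blast
  then show ?case by simp
qed

lemma cls_sub: "is_graph n E \<Longrightarrow> v < n \<Longrightarrow> cls E v \<subseteq> {..<n}"
  unfolding cls_def using grel_bound by blast

lemma cls_finite: assumes "is_graph n E" "v < n" shows "finite (cls E v)"
  using finite_subset[OF cls_sub[OF assms] finite_lessThan] .

lemma cls_card_pos: assumes "is_graph n E" "v < n" shows "card (cls E v) \<ge> 1"
proof -
  have "cls E v \<noteq> {}" using cls_self by blast
  then show ?thesis using cls_finite[OF assms] by (simp add: Suc_le_eq card_gt_0_iff)
qed

lemma sum_inv_card:
  assumes "is_graph n E"
  shows "(\<Sum>v<n. 1 / real (card (cls E v))) = real (ncomp n E)"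
proof -
  have "(\<Sum>v<n. 1 / real (card (cls E v))) =
    (\<Sum>C\<in>cls E ` {..<n}. \<Sum>v\<in>{x\<in>{..<n}. cls E x = C}. 1 / real (card (cls E v)))"
    by (rule sum.image_gen) simp
  also have "\<dots> = (\<Sum>C\<in>cls E ` {..<n}. 1)"
  proof (rule sum.cong[OF refl])
    fix C assume "C \<in> cls E ` {..<n}"
    then obtain x where x: "x < n" "C = cls E x" by auto
    have fib: "{y\<in>{..<n}. cls E y = C} = C"
    proof
      show "{y \<in> {..<n}. cls E y = C} \<subseteq> C" using cls_self by blast
      show "C \<subseteq> {y \<in> {..<n}. cls E y = C}"
        using x cls_eq cls_sub[OF assms] by blast
    qed
    have "(\<Sum>v\<in>{y\<in>{..<n}. cls E y = C}. 1 / real (card (cls E v))) = (\<Sum>v\<in>C. 1 / real (card C))"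
      unfolding fib using x cls_eq by (intro sum.cong) auto
    also have "\<dots> = 1" using cls_card_pos[OF assms x(1)] x by simp
    finally show "(\<Sum>v\<in>{y\<in>{..<n}. cls E y = C}. 1 / real (card (cls E v))) = 1" .
  qed
  also have "\<dots> = real (ncomp n E)" by (simp add: ncomp_def)
  finally show ?thesis .
qed

lemma path_insert:
  assumes "(x, y) \<in> grel (insert {a, b} E)"
  shows "(x, y) \<in> grel E \<or> (x, a) \<in> grel E \<or> (x, b) \<in> grel E"
  using assms unfolding grel_def
proof (induction rule: rtrancl_induct)
  case base then show ?case by simp
next
  case (step y z)
  show ?case
  proof (cases "{y, z} \<in> E")
    case True
    then show ?thesis using step(3) by (meson case_prodI mem_Collect_eq rtrancl.rtrancl_into_rtrancl)
  next
    case False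
    then have "{y, z} = {a, b}" using step(2) by auto
    then have "y = a \<or> y = b" by (metis doubleton_eq_iff)
    then show ?thesis using step(3) by auto
  qed
qed

lemma card_image_le_fun:
  assumes "finite W" "\<And>x y. x \<in> W \<Longrightarrow> y \<in> W \<Longrightarrow> g x = g y \<Longrightarrow> f x = f y"
  shows "card (f ` W) \<le> card (g ` W)"
proof -
  define h where "h C = f (SOME x. x \<in> W \<and> g x = C)" for C
  have "f ` W = h ` (g ` W)"
  proof (intro set_eqI iffI)
    fix z assume "z \<in> f ` W"
    then obtain x where x: "x \<in> W" "z = f x" by auto
    have "\<exists>y. y \<in> W \<and> g y = g x" using x by blast
    then have "(SOME y. y \<in> W \<and> g y = g x) \<in> W \<and> g (SOME y. y \<in> W \<and> g y = g x) = g x"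
      by (rule someI_ex)
    then have "h (g x) = f x" unfolding h_def using assms(2) x by metis
    then have "z = h (g x)" using x by simp
    then show "z \<in> h ` (g ` W)" using x by blast
  next
    fix z assume "z \<in> h ` (g ` W)"
    then obtain x where x: "x \<in> W" "z = h (g x)" by auto
    have "\<exists>y. y \<in> W \<and> g y = g x" using x by blast
    then have "(SOME y. y \<in> W \<and> g y = g x) \<in> W \<and> g (SOME y. y \<in> W \<and> g y = g x) = g x"
      by (rule someI_ex)
    then show "z \<in> f ` W" unfolding x h_def by blast
  qed
  then show ?thesis using assms(1) by (simp add: card_image_le)
qed

lemma ncomp_insert:
  "ncomp n E \<le> ncomp n (insert {a, b} E) + 1"
proof -
  let ?E' = "insert {a, b} E"
  define W where "W = {x\<in>{..<n}. cls E x \<noteq> cls E b}"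
  have finW: "finite W" by (simp add: W_def)
  have "cls E ` {..<n} \<subseteq> insert (cls E b) (cls E ` W)" unfolding W_def by blast
  then have "ncomp n E \<le> card (insert (cls E b) (cls E ` W))"
    unfolding ncomp_def using finW by (intro card_mono) simp_all
  also have "\<dots> \<le> card (cls E ` W) + 1" using finW by (simp add: card_insert_if)
  also have "card (cls E ` W) \<le> card (cls ?E' ` W)"
  proof (rule card_image_le_fun)
    show "finite W" by (rule finW)
  next
    fix x y assume xy: "x \<in> W" "y \<in> W" "cls ?E' x = cls ?E' y"
    then have "y \<in> cls ?E' x" using cls_self by metis
    then have p: "(x, y) \<in> grel ?E'" by (simp add: cls_def)
    have nb: "cls E x \<noteq> cls E b" "cls E y \<noteq> cls E b" using xy W_def by auto
    from path_insert[OF p] show "cls E x = cls E y"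
    proof (elim disjE)
      assume "(x, y) \<in> grel E" then show ?thesis by (rule cls_eq_grel)
    next
      assume "(x, b) \<in> grel E" then show ?thesis using nb cls_eq_grel by blast
    next
      assume xa: "(x, a) \<in> grel E"
      from path_insert[OF grel_sym[OF p]] show ?thesis
      proof (elim disjE)
        assume "(y, x) \<in> grel E" then show ?thesis using cls_eq_grel by metis
      next
        assume "(y, b) \<in> grel E" then show ?thesis using nb cls_eq_grel by blast
      next
        assume "(y, a) \<in> grel E" then show ?thesis using xa cls_eq_grel by metis
      qed
    qed
  qed
  also have "card (cls ?E' ` W) \<le> ncomp n ?E'"
    unfolding ncomp_def by (intro card_mono) (simp, unfold W_def, blast)
  finally show ?thesis by simp
qed

lemma ncomp_union:
  assumes "finite F" "is_graph n (E \<union> F)"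
  shows "ncomp n E \<le> ncomp n (E \<union> F) + card F"
  using assms
proof (induction F rule: finite_induct)
  case empty then show ?case by simp
next
  case (insert e F)
  then have g: "is_graph n (E \<union> F)" by (simp add: is_graph_def)
  from insert(4) obtain a b where e: "e = {a, b}" unfolding is_graph_def by auto
  have "ncomp n (E \<union> F) \<le> ncomp n (insert {a,b} (E \<union> F)) + 1" by (rule ncomp_insert)
  then show ?case using insert(1,2) insert(3)[OF g] e by simp
qed

lemma ncomp_empty: "ncomp n {} = n"
proof -
  have "cls {} x = {x}" for x by (simp add: cls_def grel_def)
  then show ?thesis unfolding ncomp_def by (simp add: card_image inj_on_def)
qed

lemma ncomp_ge: "is_graph n E \<Longrightarrow> n \<le> ncomp n E + card E"
  using ncomp_union[of E n "{}"] ncomp_empty[of n] is_graph_finite by simp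

lemma connected_ncomp:
  assumes "graph_connected n E" "0 < n"
  shows "ncomp n E = 1"
proof -
  have "cls E u = cls E 0" if hu: "u < n" for u
  proof -
    have "(0, u) \<in> grel E" using assms hu unfolding graph_connected_def grel_def by simp
    then show ?thesis by (rule cls_eq_grel[symmetric])
  qed
  then have a: "cls E ` {..<n} \<subseteq> {cls E 0}" by blast
  have b: "cls E 0 \<in> cls E ` {..<n}" using assms(2) by simp
  have "cls E ` {..<n} = {cls E 0}" using a b by blast
  then show ?thesis by (simp add: ncomp_def)
qed

lemma close_imp:
  assumes "is_graph n E" "0 < n" "0 < m" "close_to_conn n m eps E"
  shows "real (ncomp n E) - 1 \<le> eps * real m"
proof -
  obtain E' where E': "is_graph n E'" "graph_connected n E'" "gdist m E E' \<le> eps"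
    using assms(4) unfolding close_to_conn_def by auto
  have fin: "finite E'" using E'(1) is_graph_finite by blast
  have g: "is_graph n (E \<union> (E' - E))" using assms(1) E'(1) by (auto simp: is_graph_def)
  have sub: "E' \<subseteq> E \<union> (E' - E)" by auto
  have "graph_connected n (E \<union> (E' - E))"
    using E'(2) grel_mono[OF sub] unfolding graph_connected_def grel_def[symmetric]
    by blast
  then have c1: "ncomp n (E \<union> (E' - E)) = 1" using connected_ncomp assms(2) by blast
  have "ncomp n E \<le> 1 + card (E' - E)" using ncomp_union[OF _ g] fin c1 by simp
  moreover have "card (E' - E) \<le> card ((E - E') \<union> (E' - E))"
    using fin is_graph_finite[OF assms(1)] by (intro card_mono) auto
  moreover have "real (card ((E - E') \<union> (E' - E))) \<le> eps * real m"
    using E'(3) assms(3) unfolding gdist_def by (simp add: divide_le_eq)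
  ultimately show ?thesis by linarith
qed

lemma imp_close:
  assumes "is_graph n E" "0 < n" "0 < m" "real (ncomp n E) - 1 \<le> eps * real m"
  shows "close_to_conn n m eps E"
proof -
  define Cs where "Cs = cls E ` {..<n}"
  define rep where "rep C = (SOME x. x \<in> C)" for C :: "nat set"
  define F where "F = (\<lambda>C. {0, rep C}) ` (Cs - {cls E 0})"
  define E' where "E' = E \<union> F"
  have c0: "cls E 0 \<in> Cs" using assms(2) Cs_def by auto
  have repC: "rep C \<in> C \<and> rep C < n \<and> rep C \<noteq> 0 \<and> cls E (rep C) = C"
    if hC: "C \<in> Cs - {cls E 0}" for C
  proof -
    obtain x where x: "x < n" "C = cls E x" using hC unfolding Cs_def by blast
    have "rep C \<in> C" unfolding rep_def using x cls_self by (metis someI_ex)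
    moreover have "rep C < n" using calculation cls_sub[OF assms(1) x(1)] x by auto
    moreover have "cls E (rep C) = C" using calculation(1) x cls_eq by blast
    moreover have "rep C \<noteq> 0" using calculation(3) hC by auto
    ultimately show ?thesis by blast
  qed
  have finCs: "finite Cs" by (simp add: Cs_def)
  have "card F \<le> card (Cs - {cls E 0})" unfolding F_def by (rule card_image_le) (simp add: finCs)
  also have "\<dots> = ncomp n E - 1" using c0 finCs by (simp add: Cs_def ncomp_def)
  finally have cF: "card F \<le> ncomp n E - 1" .
  have nc1: "ncomp n E \<ge> 1" using c0 finCs unfolding ncomp_def Cs_def[symmetric]
    by (metis One_nat_def Suc_leI card_gt_0_iff empty_iff)
  have gE': "is_graph n E'"
    using assms(1) repC assms(2) unfolding E'_def F_def is_graph_def by fastforce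
  have con0: "(0, u) \<in> grel E'" if "u < n" for u
  proof (cases "cls E u = cls E 0")
    case True
    then have "(0, u) \<in> grel E" using cls_self by (metis cls_def mem_Collect_eq)
    then show ?thesis using grel_mono[of E E'] E'_def by blast
  next
    case False
    let ?C = "cls E u"
    have C: "?C \<in> Cs - {cls E 0}" using that False Cs_def by auto
    have "{0, rep ?C} \<in> E'" using C unfolding E'_def F_def by blast
    then have a: "(0, rep ?C) \<in> grel E'" unfolding grel_def by blast
    have "(u, rep ?C) \<in> grel E" using repC[OF C] by (simp add: cls_def)
    then have "(rep ?C, u) \<in> grel E'" using grel_sym grel_mono[of E E'] E'_def by blast
    then show ?thesis using a grel_trans by blast
  qed
  have conn: "graph_connected n E'"
    unfolding graph_connected_def grel_def[symmetric]
    using con0 grel_sym grel_trans by blast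
  have sd: "(E - E') \<union> (E' - E) \<subseteq> F" unfolding E'_def by auto
  have finF: "finite F" unfolding F_def using finCs by simp
  have "card ((E - E') \<union> (E' - E)) \<le> card F" using card_mono[OF finF sd] .
  then have "real (card ((E - E') \<union> (E' - E))) \<le> real (ncomp n E) - 1" using cF nc1 by linarith
  then have "gdist m E E' \<le> eps" using assms(3,4) unfolding gdist_def by (simp add: divide_le_eq)
  then show ?thesis unfolding close_to_conn_def using gE' conn by blast
qed




primrec readn :: "nat \<Rightarrow> nat \<Rightarrow> nat \<Rightarrow> nat list gt" where
  "readn x i 0 = Ret []"
| "readn x i (Suc k) = GNbr x i (\<lambda>w. gbind (readn x (Suc i) k)
      (\<lambda>l. Ret ((case w of Some y \<Rightarrow> y | None \<Rightarrow> 0) # l)))"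

lemma grun_readn:
  "i + k \<le> length (adj x) \<Longrightarrow> grun adj (readn x i k) = (map (\<lambda>j. adj x ! j) [i..<i+k], k)"
proof (induction k arbitrary: i)
  case 0 then show ?case by simp
next
  case (Suc k)
  have a: "nbr_answer adj x i = Some (adj x ! i)" using Suc.prems by (simp add: nbr_answer_def)
  have "[i..<i + Suc k] = i # [Suc i..<Suc i + k]" by (simp add: upt_conv_Cons)
  then show ?case using Suc.IH[of "Suc i"] Suc.prems by (simp add: a grun_bind)
qed

lemma grun_readn_all:
  "grun adj (readn x 0 (length (adj x))) = (adj x, length (adj x))"
  using grun_readn[of 0 "length (adj x)" adj x] by (simp add: map_nth)

primrec bfs :: "nat \<Rightarrow> nat \<Rightarrow> nat list \<Rightarrow> nat list \<Rightarrow> real gt" where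
  "bfs s 0 S U = Ret 0"
| "bfs s (Suc f) S U = (case U of [] \<Rightarrow> Ret (1 / real (length S)) | x # U' \<Rightarrow>
    GDeg x (\<lambda>d. if s < d then Ret 0 else gbind (readn x 0 d) (\<lambda>ns.
      (if s < length (S @ filter (\<lambda>y. y \<notin> set S) ns) then Ret 0
       else bfs s f (S @ filter (\<lambda>y. y \<notin> set S) ns) (U' @ filter (\<lambda>y. y \<notin> set S) ns)))))"

lemma bfs_cost: "snd (grun adj (bfs s f S U)) \<le> f * (s + 1)"
proof (induction f arbitrary: S U)
  case 0 then show ?case by simp
next
  case (Suc f)
  show ?case
  proof (cases U)
    case Nil then show ?thesis by simp
  next
    case (Cons x U')
    let ?d = "length (adj x)"
    show ?thesis
    proof (cases "s < ?d")
      case True then show ?thesis using Cons by simp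
    next
      case False
      let ?new = "filter (\<lambda>y. y \<notin> set S) (adj x)"
      have "snd (grun adj (if s < length (S @ ?new) then Ret 0
           else bfs s f (S @ ?new) (U' @ ?new))) \<le> f * (s + 1)"
        using Suc.IH by simp
      then show ?thesis using Cons False
        by (cases "s < length (S @ ?new)") (simp_all add: grun_bind grun_readn_all)
    qed
  qed
qed

lemma edge_iff:
  assumes "valid_adj n adj"
  shows "{x, y} \<in> adj_edges adj \<longleftrightarrow> y \<in> set (adj x)"
proof
  assume "{x, y} \<in> adj_edges adj"
  then obtain u w where uw: "{x, y} = {u, w}" "w \<in> set (adj u)" unfolding adj_edges_def by blast
  from uw(1) have "(x = u \<and> y = w) \<or> (x = w \<and> y = u)" by (simp add: doubleton_eq_iff)
  then show "y \<in> set (adj x)"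
  proof
    assume "x = u \<and> y = w" then show ?thesis using uw by simp
  next
    assume "x = w \<and> y = u" then show ?thesis using uw assms unfolding valid_adj_def by blast
  qed
next
  assume "y \<in> set (adj x)" then show "{x, y} \<in> adj_edges adj" unfolding adj_edges_def by blast
qed

lemma is_graph_adj:
  assumes "valid_adj n adj"
  shows "is_graph n (adj_edges adj)"
  unfolding is_graph_def
proof
  fix e assume "e \<in> adj_edges adj"
  then obtain u w where uw: "e = {u, w}" "w \<in> set (adj u)" unfolding adj_edges_def by blast
  have "w < n" using uw(2) assms unfolding valid_adj_def by blast
  moreover have "u \<in> set (adj w)" using uw(2) assms unfolding valid_adj_def by blast
  then have "u < n" using assms unfolding valid_adj_def by blast
  moreover have "u \<noteq> w" using uw(2) assms unfolding valid_adj_def by blast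
  ultimately show "\<exists>u v. u < n \<and> v < n \<and> u \<noteq> v \<and> e = {u, v}" using uw(1) by blast
qed

definition Xf :: "(nat \<Rightarrow> nat list) \<Rightarrow> nat \<Rightarrow> nat \<Rightarrow> real" where
  "Xf adj s v = (if card (cls (adj_edges adj) v) \<le> s then 1 / real (card (cls (adj_edges adj) v)) else 0)"

lemma cls_closed:
  assumes "valid_adj n adj" "x \<in> cls (adj_edges adj) v"
  shows "set (adj x) \<subseteq> cls (adj_edges adj) v"
proof
  fix y assume "y \<in> set (adj x)"
  then have "{x, y} \<in> adj_edges adj" using edge_iff[OF assms(1)] by blast
  then have "(x, y) \<in> grel (adj_edges adj)" unfolding grel_def by blast
  then show "y \<in> cls (adj_edges adj) v" using assms(2) grel_trans unfolding cls_def by blast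
qed

lemma cls_in_closed:
  assumes "valid_adj n adj" "v \<in> A" "\<And>x. x \<in> A \<Longrightarrow> set (adj x) \<subseteq> A"
  shows "cls (adj_edges adj) v \<subseteq> A"
proof
  fix u assume "u \<in> cls (adj_edges adj) v"
  then have "(v, u) \<in> {(x, y). {x, y} \<in> adj_edges adj}\<^sup>*" unfolding cls_def grel_def by simp
  then show "u \<in> A"
  proof (induction rule: rtrancl_induct)
    case base then show ?case using assms(2) .
  next
    case (step y z)
    then have "z \<in> set (adj y)" using edge_iff[OF assms(1)] by simp
    then show ?case using step(3) assms(3) by blast
  qed
qed

definition inv :: "nat \<Rightarrow> (nat \<Rightarrow> nat list) \<Rightarrow> nat \<Rightarrow> nat \<Rightarrow> nat list \<Rightarrow> nat list \<Rightarrow> bool" where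
  "inv s adj v f S U \<longleftrightarrow> distinct S \<and> distinct U \<and> set U \<subseteq> set S \<and> v \<in> set S \<and>
     set S \<subseteq> cls (adj_edges adj) v \<and> (\<forall>x\<in>set S - set U. set (adj x) \<subseteq> set S) \<and>
     length S \<le> s \<and> s + 1 \<le> length S - length U + f"

lemma bfs_correct:
  assumes "valid_adj n adj" "v < n" "inv s adj v f S U"
  shows "fst (grun adj (bfs s f S U)) = Xf adj s v"
  using assms(3)
proof (induction f arbitrary: S U)
  case 0
  then have "length U \<le> length S \<or> True" by simp
  from 0 show ?case unfolding inv_def by linarith
next
  case (Suc f)
  let ?C = "cls (adj_edges adj) v"
  have g: "is_graph n (adj_edges adj)" using is_graph_adj[OF assms(1)] .
  have finC: "finite ?C" using cls_finite[OF g assms(2)] .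
  have I: "distinct S" "distinct U" "set U \<subseteq> set S" "v \<in> set S" "set S \<subseteq> ?C"
    "\<forall>x\<in>set S - set U. set (adj x) \<subseteq> set S" "length S \<le> s" "s + 1 \<le> length S - length U + Suc f"
    using Suc.prems unfolding inv_def by auto
  have cardS: "length S \<le> card ?C"
    using card_mono[OF finC I(5)] distinct_card[OF I(1)] by simp
  show ?case
  proof (cases U)
    case Nil
    have "?C \<subseteq> set S" using cls_in_closed[OF assms(1) I(4)] I(6) Nil by auto
    then have "set S = ?C" using I(5) by blast
    then have "card ?C = length S" using distinct_card[OF I(1)] by simp
    then show ?thesis using Nil I(7) by (simp add: Xf_def)
  next
    case (Cons x U')
    have xC: "x \<in> ?C" using Cons I(3) I(5) by auto
    let ?d = "length (adj x)"
    show ?thesis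
    proof (cases "s < ?d")
      case True
      have "insert x (set (adj x)) \<subseteq> ?C" using cls_closed[OF assms(1) xC] xC by blast
      moreover have "card (insert x (set (adj x))) = Suc ?d"
        using assms(1) unfolding valid_adj_def by (simp add: distinct_card)
      ultimately have "Suc ?d \<le> card ?C" using card_mono[OF finC] by metis
      then have "Xf adj s v = 0" using True by (simp add: Xf_def)
      then show ?thesis using Cons True by simp
    next
      case False
      define new where "new = filter (\<lambda>y. y \<notin> set S) (adj x)"
      have dnew: "distinct new" using assms(1) unfolding new_def valid_adj_def by simp
      have dS': "distinct (S @ new)" using I(1) dnew by (auto simp: new_def)
      have newC: "set new \<subseteq> ?C" using cls_closed[OF assms(1) xC] unfolding new_def by auto
      have S'C: "set (S @ new) \<subseteq> ?C" using newC I(5) by simp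
      have cardS': "length (S @ new) \<le> card ?C"
        using card_mono[OF finC S'C] distinct_card[OF dS'] by simp
      have run: "fst (grun adj (bfs s (Suc f) S U)) =
          fst (grun adj (if s < length (S @ new) then Ret 0 else bfs s f (S @ new) (U' @ new)))"
        using Cons False by (simp add: grun_bind grun_readn_all new_def)
      show ?thesis
      proof (cases "s < length (S @ new)")
        case True
        then have "Xf adj s v = 0" using cardS' by (simp add: Xf_def)
        then show ?thesis using run True by simp
      next
        case F2: False
        have "inv s adj v f (S @ new) (U' @ new)"
          unfolding inv_def
        proof (intro conjI)
          show "distinct (S @ new)" by (rule dS')
          show "distinct (U' @ new)" using I(2) Cons dnew I(3) by (auto simp: new_def)
          show "set (U' @ new) \<subseteq> set (S @ new)" using I(3) Cons by auto
          show "v \<in> set (S @ new)" using I(4) by simp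
          show "set (S @ new) \<subseteq> ?C" by (rule S'C)
          show "\<forall>y\<in>set (S @ new) - set (U' @ new). set (adj y) \<subseteq> set (S @ new)"
          proof
            fix y assume y: "y \<in> set (S @ new) - set (U' @ new)"
            then have yS: "y \<in> set S" "y \<notin> set U'" by auto
            show "set (adj y) \<subseteq> set (S @ new)"
            proof (cases "y = x")
              case True
              then show ?thesis unfolding new_def by auto
            next
              case False
              then have "y \<in> set S - set U" using yS Cons by auto
              then show ?thesis using I(6) by auto
            qed
          qed
          show "length (S @ new) \<le> s" using F2 by simp
          have "length U \<le> length S"
            using distinct_card[OF I(2)] distinct_card[OF I(1)] card_mono[OF _ I(3)] by fastforce
          then show "s + 1 \<le> length (S @ new) - length (U' @ new) + f" using I(8) Cons by simp
        qed
        then have "fst (grun adj (bfs s f (S @ new) (U' @ new))) = Xf adj s v" by (rule Suc.IH)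
        then show ?thesis using run F2 by simp
      qed
    qed
  qed
qed

primrec samp :: "nat \<Rightarrow> nat list \<Rightarrow> real gt" where
  "samp s [] = Ret 0"
| "samp s (v # vs) = gbind (bfs s (Suc s) [v] [v]) (\<lambda>y. gbind (samp s vs) (\<lambda>z. Ret (y + z)))"

lemma samp_cost: "snd (grun adj (samp s vs)) \<le> length vs * ((s + 1) * (s + 1))"
proof (induction vs)
  case Nil then show ?case by simp
next
  case (Cons v vs)
  have "snd (grun adj (bfs s (Suc s) [v] [v])) \<le> Suc s * (s + 1)" by (rule bfs_cost)
  then show ?case using Cons by (simp add: grun_bind del: bfs.simps)
qed

lemma samp_correct:
  assumes "valid_adj n adj" "1 \<le> s" "set vs \<subseteq> {..<n}"
  shows "fst (grun adj (samp s vs)) = (\<Sum>v\<leftarrow>vs. Xf adj s v)"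
  using assms(3)
proof (induction vs)
  case Nil then show ?case by simp
next
  case (Cons v vs)
  have v: "v < n" using Cons.prems by simp
  have "inv s adj v (Suc s) [v] [v]" unfolding inv_def using assms(2) cls_self by auto
  then have "fst (grun adj (bfs s (Suc s) [v] [v])) = Xf adj s v" by (rule bfs_correct[OF assms(1) v])
  then show ?case using Cons by (simp add: grun_bind del: bfs.simps)
qed




definition LL :: "nat \<Rightarrow> nat \<Rightarrow> nat list set" where
  "LL n r = {xs. set xs \<subseteq> {..<n} \<and> length xs = r}"

lemma LL_finite: "finite (LL n r)"
  unfolding LL_def by (rule finite_lists_length_eq) simp

lemma LL_card: "card (LL n r) = n ^ r"
  unfolding LL_def using card_lists_length_eq[of "{..<n}" r] by simp

lemma LL_Suc: "LL n (Suc r) = (\<lambda>(x, xs). x # xs) ` ({..<n} \<times> LL n r)"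
  unfolding LL_def by (auto simp: length_Suc_conv)

lemma LL_inj: "inj_on (\<lambda>(x, xs). x # xs) A"
  by (auto simp: inj_on_def)

lemma second_moment:
  fixes Z :: "nat \<Rightarrow> real"
  assumes "(\<Sum>v<n. Z v) = 0" "\<And>v. \<bar>Z v\<bar> \<le> 1"
  shows "(\<Sum>xs\<in>LL n r. (\<Sum>z\<leftarrow>xs. Z z)^2) \<le> real r * real n ^ r"
proof (induction r)
  case 0
  have "LL n 0 = {[]}" unfolding LL_def by auto
  then show ?case by simp
next
  case (Suc r)
  let ?S = "\<lambda>xs. (\<Sum>z\<leftarrow>xs. Z z)"
  have "(\<Sum>xs\<in>LL n (Suc r). ?S xs ^ 2) = (\<Sum>p\<in>{..<n} \<times> LL n r. ?S (fst p # snd p) ^ 2)"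
    unfolding LL_Suc by (subst sum.reindex[OF LL_inj]) (simp add: case_prod_beta)
  also have "\<dots> = (\<Sum>x<n. \<Sum>xs\<in>LL n r. (Z x + ?S xs) ^ 2)"
    by (simp add: sum.cartesian_product case_prod_beta)
  also have "\<dots> = (\<Sum>x<n. \<Sum>xs\<in>LL n r. Z x ^ 2 + 2 * Z x * ?S xs + ?S xs ^ 2)"
    by (simp add: power2_sum algebra_simps)
  also have "\<dots> = (\<Sum>x<n. \<Sum>xs\<in>LL n r. Z x ^ 2) + (\<Sum>x<n. \<Sum>xs\<in>LL n r. 2 * Z x * ?S xs)
      + (\<Sum>x<n. \<Sum>xs\<in>LL n r. ?S xs ^ 2)"
    by (simp add: sum.distrib)
  also have "\<dots> = (\<Sum>x<n. real (card (LL n r)) * Z x ^ 2) + real n * (\<Sum>xs\<in>LL n r. ?S xs ^ 2)"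
  proof -
    have "(\<Sum>x<n. \<Sum>xs\<in>LL n r. 2 * Z x * ?S xs) = (\<Sum>x<n. Z x * (2 * (\<Sum>xs\<in>LL n r. ?S xs)))"
      by (intro sum.cong refl) (simp add: sum_distrib_left algebra_simps)
    also have "\<dots> = (\<Sum>x<n. Z x) * (2 * (\<Sum>xs\<in>LL n r. ?S xs))"
      by (simp add: sum_distrib_right)
    finally have c: "(\<Sum>x<n. \<Sum>xs\<in>LL n r. 2 * Z x * ?S xs) = 0" using assms(1) by simp
    show ?thesis by (simp add: c)
  qed
  also have "\<dots> \<le> (\<Sum>x<n. real n ^ r * 1) + real n * (real r * real n ^ r)"
  proof (intro add_mono sum_mono mult_left_mono Suc.IH)
    fix x
    have "Z x ^ 2 \<le> 1" using assms(2)[of x] by (simp add: abs_le_square_iff power2_eq_square abs_le_iff) (smt (verit) mult_le_one mult_minus_left mult_minus_right assms(2)[of x] abs_le_iff)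
    then show "real (card (LL n r)) * Z x ^ 2 \<le> real n ^ r * 1"
      by (simp add: LL_card mult_left_le)
  qed simp
  also have "\<dots> = real (Suc r) * real n ^ Suc r" by (simp add: algebra_simps)
  finally show ?case .
qed

lemma count_bad:
  fixes Z :: "nat \<Rightarrow> real"
  assumes "(\<Sum>v<n. Z v) = 0" "\<And>v. \<bar>Z v\<bar> \<le> 1" "a > 0"
  shows "real (card {xs\<in>LL n r. a \<le> \<bar>\<Sum>z\<leftarrow>xs. Z z\<bar>}) * a^2 \<le> real r * real n ^ r"
proof -
  let ?S = "\<lambda>xs. (\<Sum>z\<leftarrow>xs. Z z)"
  let ?B = "{xs\<in>LL n r. a \<le> \<bar>?S xs\<bar>}"
  have "real (card ?B) * a^2 = (\<Sum>xs\<in>?B. a^2)" by simp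
  also have "\<dots> \<le> (\<Sum>xs\<in>?B. ?S xs ^ 2)"
  proof (rule sum_mono)
    fix xs assume "xs \<in> ?B"
    then have "a \<le> \<bar>?S xs\<bar>" by simp
    then have "a^2 \<le> \<bar>?S xs\<bar>^2" using assms(3) by (intro power_mono) auto
    then show "a^2 \<le> ?S xs ^ 2" by simp
  qed
  also have "\<dots> \<le> (\<Sum>xs\<in>LL n r. ?S xs ^ 2)"
    by (rule sum_mono2[OF LL_finite]) auto
  also have "\<dots> \<le> real r * real n ^ r" by (rule second_moment[OF assms(1,2)])
  finally show ?thesis .
qed




lemma sum_list_minus_const:
  fixes f :: "nat \<Rightarrow> real"
  shows "(\<Sum>z\<leftarrow>xs. f z - c) = (\<Sum>z\<leftarrow>xs. f z) - real (length xs) * c"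
  by (induction xs) (auto simp: algebra_simps)

lemma Xf_bounds: "0 \<le> Xf adj s v" "Xf adj s v \<le> 1"
  unfolding Xf_def by (auto simp: divide_le_eq_1)

lemma Xf_sum_bounds:
  assumes "valid_adj n adj" "1 \<le> s"
  shows "(\<Sum>v<n. Xf adj s v) \<le> real (ncomp n (adj_edges adj))"
    "real (ncomp n (adj_edges adj)) - real n / real s \<le> (\<Sum>v<n. Xf adj s v)"
proof -
  let ?E = "adj_edges adj"
  have g: "is_graph n ?E" by (rule is_graph_adj[OF assms(1)])
  have k: "(\<Sum>v<n. 1 / real (card (cls ?E v))) = real (ncomp n ?E)" by (rule sum_inv_card[OF g])
  have t1: "Xf adj s v \<le> 1 / real (card (cls ?E v))" for v unfolding Xf_def by auto
  have t2: "1 / real (card (cls ?E v)) - Xf adj s v \<le> 1 / real s" if "v < n" for v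
  proof (cases "card (cls ?E v) \<le> s")
    case True then show ?thesis unfolding Xf_def by simp
  next
    case False
    then have "real s \<le> real (card (cls ?E v))" by simp
    then have "1 / real (card (cls ?E v)) \<le> 1 / real s" using assms(2)
      by (intro divide_left_mono) auto
    then show ?thesis using False unfolding Xf_def by simp
  qed
  show "(\<Sum>v<n. Xf adj s v) \<le> real (ncomp n ?E)" unfolding k[symmetric] by (rule sum_mono) (rule t1)
  have "(\<Sum>v<n. 1 / real (card (cls ?E v)) - Xf adj s v) \<le> (\<Sum>v<n. 1 / real s)"
    by (rule sum_mono) (simp add: t2)
  then show "real (ncomp n ?E) - real n / real s \<le> (\<Sum>v<n. Xf adj s v)"
    unfolding k[symmetric] by (simp add: sum_subtractf)
qed

theorem mainTheorem4:
  fixes \<alpha> \<beta> \<epsilon> :: real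
  assumes "\<alpha> > 0" and "\<beta> > 0" and "\<epsilon> > 0"
  shows "\<exists>T q. tolerant_conn_tester \<epsilon> ((1 + \<alpha>) * \<epsilon> + \<beta>) T q"
proof -
  define e2 where "e2 = (1 + \<alpha>) * \<epsilon> + \<beta>"
  define C where "C = e2 + 2"
  define t where "t = \<beta> / (4 * C)"
  define s where "s = nat \<lceil>4 * C / \<beta>\<rceil> + 1"
  define r where "r = nat \<lceil>3 / t^2\<rceil> + 1"
  define tree where "tree n m xs = toq (gbind (samp s xs)
      (\<lambda>S. Ret (real n * S / real r - 1 \<le> (\<epsilon> + \<beta> / 2) * real m)))" for n m :: nat and xs
  define T where "T n m = (if n = 0 then return_pmf (Halt True)
      else if (e2 + 1) * real m + 1 < real n then return_pmf (Halt False)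
      else map_pmf (tree n m) (pmf_of_set (LL n r)))" for n m
  define q where "q n m = r * ((s + 1) * (s + 1))" for n m :: nat
  have e2ge: "\<epsilon> + \<beta> \<le> e2" unfolding e2_def using assms by (simp add: algebra_simps)
  have Cpos: "C > 0" unfolding C_def using e2ge assms by linarith
  have tpos: "t > 0" unfolding t_def using Cpos assms by simp
  have s1: "1 \<le> s" unfolding s_def by simp
  have sge: "4 * C / \<beta> \<le> real s" unfolding s_def by linarith
  have Cs: "C \<le> \<beta> / 4 * real s" using sge assms(2) by (simp add: divide_le_eq algebra_simps)
  have Ct: "C * t = \<beta> / 4" unfolding t_def using Cpos by simp
  have rpos: "0 < r" unfolding r_def by simp
  have rge: "3 / t^2 \<le> real r" unfolding r_def by linarith
  have rt2: "3 \<le> real r * t^2" using rge tpos by (simp add: divide_le_eq)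
  have run_tree: "run adj (tree n m xs) =
      (real n * fst (grun adj (samp s xs)) / real r - 1 \<le> (\<epsilon> + \<beta> / 2) * real m,
       snd (grun adj (samp s xs)))" for adj n m xs
    by (simp add: tree_def run_toq grun_bind)
  have LLne: "LL n r \<noteq> {}" if "0 < n" for n
  proof -
    have "replicate r 0 \<in> LL n r" using that unfolding LL_def by (auto simp: set_replicate_conv_if)
    then show ?thesis by blast
  qed
  have A: "\<forall>n m adj. valid_adj n adj \<longrightarrow> card (adj_edges adj) \<le> m \<longrightarrow>
        (\<forall>t\<in>set_pmf (T n m). snd (run adj t) \<le> q n m)"
  proof (intro allI impI ballI)
    fix n m adj tr assume tr: "tr \<in> set_pmf (T n m)"
    show "snd (run adj tr) \<le> q n m"
    proof (cases "n = 0 \<or> (e2 + 1) * real m + 1 < real n")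
      case True then show ?thesis using tr unfolding T_def by (auto split: if_splits)
    next
      case False
      then have "tr \<in> tree n m ` LL n r"
        using tr LLne[of n] LL_finite[of n r] unfolding T_def by auto
      then obtain xs where xs: "xs \<in> LL n r" "tr = tree n m xs" by blast
      have "length xs = r" using xs unfolding LL_def by simp
      then show ?thesis using xs samp_cost[of adj s xs] unfolding q_def by (simp add: run_tree)
    qed
  qed
  have B: "\<forall>c>0. \<forall>\<delta>>0. \<exists>M. \<forall>n m. M \<le> m \<longrightarrow> c * real n \<le> real m \<longrightarrow>
        real (q n m) \<le> \<delta> * real m"
  proof (intro allI impI)
    fix c \<delta> :: real assume "c > 0" "\<delta> > 0"
    define Q where "Q = r * ((s + 1) * (s + 1))"
    show "\<exists>M. \<forall>n m. M \<le> m \<longrightarrow> c * real n \<le> real m \<longrightarrow> real (q n m) \<le> \<delta> * real m"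
    proof (intro exI allI impI)
      fix n m :: nat assume "nat \<lceil>real Q / \<delta>\<rceil> \<le> m"
      then have "real Q / \<delta> \<le> real m" by linarith
      then show "real (q n m) \<le> \<delta> * real m" using \<open>\<delta> > 0\<close> unfolding q_def Q_def
        by (simp add: divide_le_eq mult.commute)
    qed
  qed
  have Cc: "\<forall>n m adj. 0 < m \<longrightarrow> valid_adj n adj \<longrightarrow> card (adj_edges adj) \<le> m \<longrightarrow>
        (close_to_conn n m \<epsilon> (adj_edges adj) \<longrightarrow> accept_prob (T n m) adj \<ge> 2/3) \<and>
        (\<not> close_to_conn n m e2 (adj_edges adj) \<longrightarrow> accept_prob (T n m) adj \<le> 1/3)"
  proof (intro allI impI)
    fix n m adj assume m0: "0 < m" and va: "valid_adj n adj" and cE: "card (adj_edges adj) \<le> m"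
    let ?E = "adj_edges adj"
    let ?k = "ncomp n ?E"
    have g: "is_graph n ?E" by (rule is_graph_adj[OF va])
    have m1: "1 \<le> real m" using m0 by simp
    show "(close_to_conn n m \<epsilon> ?E \<longrightarrow> accept_prob (T n m) adj \<ge> 2/3) \<and>
        (\<not> close_to_conn n m e2 ?E \<longrightarrow> accept_prob (T n m) adj \<le> 1/3)"
    proof (cases "n = 0")
      case True
      have "?E = {}" using va True unfolding valid_adj_def adj_edges_def by auto
      then have "close_to_conn n m e2 ?E"
        unfolding close_to_conn_def using True e2ge assms
        by (intro exI[of _ "{}"]) (auto simp: is_graph_def graph_connected_def gdist_def)
      moreover have "accept_prob (T n m) adj = 1" using True unfolding T_def accept_prob_def by simp
      ultimately show ?thesis by simp
    next
      case n0: False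
      show ?thesis
      proof (cases "(e2 + 1) * real m + 1 < real n")
        case True
        have "n \<le> ?k + card ?E" by (rule ncomp_ge[OF g])
        then have "real n \<le> real ?k + real m" using cE by linarith
        then have far: "e2 * real m < real ?k - 1" using True by (simp add: algebra_simps)
        have nc2: "\<not> close_to_conn n m e2 ?E" using close_imp[OF g _ m0, of e2] n0 far by auto
        have "\<epsilon> * real m \<le> e2 * real m" using e2ge assms m1 by (intro mult_right_mono) auto
        then have nc1: "\<not> close_to_conn n m \<epsilon> ?E" using close_imp[OF g _ m0, of \<epsilon>] n0 far by fastforce
        have "accept_prob (T n m) adj = 0" using True n0 unfolding T_def accept_prob_def by simp
        then show ?thesis using nc1 nc2 by simp
      next
        case False
        have npos: "0 < n" using n0 by simp
        have nC: "real n \<le> C * real m" using False m1 unfolding C_def by (simp add: algebra_simps)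
        define X where "X = Xf adj s"
        define A where "A = (\<Sum>v<n. X v)"
        define \<mu> where "\<mu> = A / real n"
        define Z where "Z v = X v - \<mu>" for v
        have Xb: "0 \<le> X v" "X v \<le> 1" for v unfolding X_def by (rule Xf_bounds)+
        have A0: "0 \<le> A" unfolding A_def using Xb by (simp add: sum_nonneg)
        have An: "A \<le> real n" unfolding A_def using sum_mono[of "{..<n}" X "\<lambda>_. 1"] Xb by simp
        have \<mu>b: "0 \<le> \<mu>" "\<mu> \<le> 1" unfolding \<mu>_def using A0 An npos by (auto simp: divide_le_eq_1)
        have Zb: "\<bar>Z v\<bar> \<le> 1" for v unfolding Z_def using Xb[of v] \<mu>b by linarith
        have Zs: "(\<Sum>v<n. Z v) = 0" unfolding Z_def \<mu>_def using npos by (simp add: sum_subtractf A_def)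
        have Ak: "A \<le> real ?k" "real ?k - real n / real s \<le> A"
          unfolding A_def X_def using Xf_sum_bounds[OF va s1] by auto
        have ns: "real n / real s \<le> \<beta> / 4 * real m"
        proof -
          have "real n \<le> \<beta> / 4 * real s * real m" using nC Cs m1 by (smt (verit) mult_right_mono)
          then show ?thesis using s1 by (simp add: divide_le_eq algebra_simps)
        qed
        have nt: "real n * t \<le> \<beta> / 4 * real m"
        proof -
          have "real n * t \<le> C * real m * t" using nC tpos by (intro mult_right_mono) auto
          also have "\<dots> = \<beta> / 4 * real m" using Ct by (simp add: algebra_simps)
          finally show ?thesis .
        qed
        define Sx where "Sx xs = (\<Sum>v\<leftarrow>xs. X v)" for xs
        define acc where "acc = {xs \<in> LL n r. real n * Sx xs / real r - 1 \<le> (\<epsilon> + \<beta> / 2) * real m}"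
        define bad where "bad = {xs \<in> LL n r. real r * t \<le> \<bar>\<Sum>z\<leftarrow>xs. Z z\<bar>}"
        have fin: "finite (LL n r)" by (rule LL_finite)
        have cardL: "real (card (LL n r)) = real n ^ r" by (simp add: LL_card)
        have npow: "0 < real n ^ r" using npos by simp
        have acc_eq: "LL n r \<inter> {xs. fst (run adj (tree n m xs))} = acc"
        proof -
          have "fst (run adj (tree n m xs)) \<longleftrightarrow> real n * Sx xs / real r - 1 \<le> (\<epsilon> + \<beta> / 2) * real m"
            if "xs \<in> LL n r" for xs
            using samp_correct[OF va s1, of xs] that unfolding Sx_def X_def LL_def by (simp add: run_tree)
          then show ?thesis unfolding acc_def by blast
        qed
        have prob: "accept_prob (T n m) adj = real (card acc) / real n ^ r"
          using False n0 LLne[OF npos] fin unfolding T_def accept_prob_def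
          by (simp add: measure_pmf_of_set acc_eq[unfolded vimage_def] vimage_def cardL)
        have bad_card: "3 * real (card bad) \<le> real n ^ r"
        proof -
          have "real (card bad) * (real r * t)^2 \<le> real r * real n ^ r"
            unfolding bad_def by (rule count_bad[OF Zs Zb]) (use rpos tpos in simp)
          then have "real r * (real (card bad) * (real r * t^2)) \<le> real r * real n ^ r"
            by (simp add: power2_eq_square algebra_simps)
          then have "real (card bad) * (real r * t^2) \<le> real n ^ r" using rpos by simp
          moreover have "3 * real (card bad) \<le> real (card bad) * (real r * t^2)"
            using rt2 by (simp add: mult.commute mult_left_mono)
          ultimately show ?thesis by linarith
        qed
        have good: "\<bar>real n * Sx xs / real r - A\<bar> < \<beta> / 4 * real m" if "xs \<in> LL n r" "xs \<notin> bad" for xs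
        proof -
          have len: "length xs = r" using that unfolding LL_def by simp
          have "(\<Sum>z\<leftarrow>xs. Z z) = Sx xs - real r * \<mu>"
            unfolding Z_def Sx_def using sum_list_minus_const[of X \<mu> xs] len by simp
          then have lt: "\<bar>Sx xs - real r * \<mu>\<bar> < real r * t" using that unfolding bad_def by auto
          have "real n * Sx xs / real r - A = real n / real r * (Sx xs - real r * \<mu>)"
            unfolding \<mu>_def using rpos npos by (simp add: field_simps)
          then have "\<bar>real n * Sx xs / real r - A\<bar> = real n / real r * \<bar>Sx xs - real r * \<mu>\<bar>"
            by (simp add: abs_mult)
          also have "\<dots> < real n / real r * (real r * t)"
            using lt npos rpos by (intro mult_strict_left_mono) auto
          also have "\<dots> = real n * t" using rpos by simp
          finally show ?thesis using nt by linarith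
        qed
        show ?thesis
        proof (intro conjI impI)
          assume cl: "close_to_conn n m \<epsilon> ?E"
          have kc: "real ?k - 1 \<le> \<epsilon> * real m" by (rule close_imp[OF g npos m0 cl])
          have "LL n r - bad \<subseteq> acc"
          proof
            fix xs assume xs: "xs \<in> LL n r - bad"
            have gd: "\<bar>real n * Sx xs / real r - A\<bar> < \<beta> / 4 * real m" using good xs by auto
            then have gd2: "real n * Sx xs / real r - A < \<beta> / 4 * real m"
              using abs_ge_self[of "real n * Sx xs / real r - A"] by linarith
            have bm: "0 \<le> \<beta> * real m" using assms(2) m1 by simp
            have "real n * Sx xs / real r - 1 \<le> (\<epsilon> + \<beta> / 2) * real m"
            proof -
              have e1: "\<beta> / 4 * real m = (\<beta> * real m) / 4" "(\<epsilon> + \<beta> / 2) * real m = \<epsilon> * real m + (\<beta> * real m) / 2"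
                by (simp_all add: distrib_right)
              show ?thesis using gd2 Ak(1) kc bm unfolding e1 by linarith
            qed
            then show "xs \<in> acc" using xs unfolding acc_def by simp
          qed
          then have "card (LL n r - bad) \<le> card acc"
            by (intro card_mono) (auto simp: acc_def fin)
          moreover have "card (LL n r) \<le> card (LL n r - bad) + card bad"
          proof -
            have "LL n r \<subseteq> (LL n r - bad) \<union> bad" by blast
            then have "card (LL n r) \<le> card ((LL n r - bad) \<union> bad)"
              using fin by (intro card_mono) (auto simp: bad_def)
            also have "\<dots> \<le> card (LL n r - bad) + card bad" by (rule card_Un_le)
            finally show ?thesis .
          qed
          ultimately have "real n ^ r \<le> real (card acc) + real (card bad)" using cardL by linarith
          then have "2 / 3 * real n ^ r \<le> real (card acc)" using bad_card by linarith
          then show "2 / 3 \<le> accept_prob (T n m) adj" unfolding prob using npow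
            by (simp add: le_divide_eq)
        next
          assume ncl: "\<not> close_to_conn n m e2 ?E"
          have kf: "e2 * real m < real ?k - 1" using imp_close[OF g npos m0, of e2] ncl by linarith
          have em: "(\<epsilon> + \<beta>) * real m \<le> e2 * real m" using e2ge m1 by (intro mult_right_mono) auto
          have "acc \<subseteq> bad"
          proof
            fix xs assume xs: "xs \<in> acc"
            show "xs \<in> bad"
            proof (rule ccontr)
              assume "xs \<notin> bad"
              then have gd: "\<bar>real n * Sx xs / real r - A\<bar> < \<beta> / 4 * real m" using good xs acc_def by auto
              have "real n * Sx xs / real r - 1 \<le> (\<epsilon> + \<beta> / 2) * real m" using xs acc_def by auto
              then have h1: "real n * Sx xs / real r - 1 \<le> \<epsilon> * real m + (\<beta> * real m) / 2"
                by (simp add: distrib_right)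
              have gd2: "A - real n * Sx xs / real r < \<beta> / 4 * real m"
                using gd abs_ge_minus_self[of "real n * Sx xs / real r - A"] by linarith
              have em2: "\<epsilon> * real m + \<beta> * real m \<le> e2 * real m" using em by (simp add: distrib_right)
              have e1: "\<beta> / 4 * real m = (\<beta> * real m) / 4" by simp
              show False using h1 gd2 Ak(2) ns kf em2 unfolding e1 by linarith
            qed
          qed
          then have "card acc \<le> card bad" using fin by (intro card_mono) (auto simp: bad_def)
          then have "real (card acc) \<le> 1/3 * real n ^ r" using bad_card by linarith
          then show "accept_prob (T n m) adj \<le> 1 / 3" unfolding prob using npow
            by (simp add: divide_le_eq)
        qed
      qed
    qed
  qed
  have "tolerant_conn_tester \<epsilon> e2 T q"
    unfolding tolerant_conn_tester_def using A B Cc by blast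
  then show ?thesis unfolding e2_def by blast
qed


end
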